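(* Let $q,t\in\mathbb N$ and let $M$ be a multigraph (without loops) with $V(M)=[t]$ and maximum degree at most $qt$. Then there is an $M$-linkage $Q=(P_{uv})_{uv\in E(M)}$ in the complete graph $K_t$ on $[t]$ such that every edge of $K_t$ lies on at most $18q$ of the paths in $Q$.
   Context: For a graph $H$ and a multigraph $M$ with $V(M)\subseteq V(H)$, an $M$-linkage in $H$ is a family of paths $(P_e)_{e\in E(M)}$ in $H$ (one per edge of $M$, counting multiplicity) such that $P_e$ has the two endpoints of $e$ as its endpoints. Degrees in multigraphs count multiplicities. *)

theory Defs
  imports Main
begin

text \<open>A loopless multigraph M on vertex set [t] = {1..t} is given as a list of
edges (pairs of endpoints); list positions index the edges, so parallel
edges are repeated entries (multiplicity).\<close>

definition multigraph_on :: "nat \<Rightarrow> (nat \<times> nat) list \<Rightarrow> bool" where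
  "multigraph_on t M \<longleftrightarrow>
     (\<forall>e \<in> set M. fst e \<in> {1..t} \<and> snd e \<in> {1..t} \<and> fst e \<noteq> snd e)"

definition mdeg :: "(nat \<times> nat) list \<Rightarrow> nat \<Rightarrow> nat" where
  "mdeg M v = length (filter (\<lambda>e. fst e = v \<or> snd e = v) M)"

text \<open>A path in the complete graph K_t on [t]: a nonempty list of distinct
vertices of [t] (any two consecutive distinct vertices are adjacent in K_t).\<close>
definition Kpath :: "nat \<Rightarrow> nat list \<Rightarrow> bool" where
  "Kpath t P \<longleftrightarrow> P \<noteq> [] \<and> distinct P \<and> set P \<subseteq> {1..t}"

definition edge_on :: "nat \<Rightarrow> nat \<Rightarrow> nat list \<Rightarrow> bool" where
  "edge_on a b P \<longleftrightarrow> (\<exists>j. Suc j < length P \<and> {P ! j, P ! Suc j} = {a, b})"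

definition linkage :: "nat \<Rightarrow> (nat \<times> nat) list \<Rightarrow> (nat \<Rightarrow> nat list) \<Rightarrow> bool" where
  "linkage t M Ps \<longleftrightarrow>
     (\<forall>i < length M. Kpath t (Ps i) \<and> hd (Ps i) = fst (M ! i) \<and> last (Ps i) = snd (M ! i))"

end

theory Submission
  imports Defs
begin

definition cnt :: "(nat \<times> nat) list \<Rightarrow> (nat \<Rightarrow> nat) \<Rightarrow> nat \<Rightarrow> nat \<Rightarrow> nat" where
  "cnt M col x w = card {i. i < length M \<and> (fst (M!i) = x \<or> snd (M!i) = x) \<and> col i = w}"

lemma cnt_snoc:
  "cnt (M @ [e]) (col(length M := c)) x w =
     cnt M col x w + (if (fst e = x \<or> snd e = x) \<and> c = w then 1 else 0)"
proof -
  let ?S = "{i. i < length M \<and> (fst (M!i) = x \<or> snd (M!i) = x) \<and> col i = w}"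
  have eq: "{i. i < length (M @ [e]) \<and> (fst ((M @ [e])!i) = x \<or> snd ((M @ [e])!i) = x)
              \<and> (col(length M := c)) i = w}
          = ?S \<union> (if (fst e = x \<or> snd e = x) \<and> c = w then {length M} else {})"
    by (auto simp: nth_append less_Suc_eq split: if_splits)
  have fin: "finite ?S" by simp
  show ?thesis unfolding cnt_def eq using fin by auto
qed

lemma mdeg_snoc: "mdeg (M @ [e]) v = mdeg M v + (if fst e = v \<or> snd e = v then 1 else 0)"
  by (simp add: mdeg_def)

lemma bad_count:
  assumes "finite W"
  shows "card {w \<in> W. cnt M col x w \<ge> k} * k \<le> mdeg M x"
proof -
  let ?B = "{w \<in> W. cnt M col x w \<ge> k}"
  let ?S = "\<lambda>w. {i. i < length M \<and> (fst (M!i) = x \<or> snd (M!i) = x) \<and> col i = w}"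
  have finB: "finite ?B" using assms by simp
  have "card ?B * k \<le> (\<Sum>w\<in>?B. cnt M col x w)"
    using sum_bounded_below[of ?B k "\<lambda>w. cnt M col x w"] by (simp add: mult.commute)
  also have "\<dots> = card (\<Union>w\<in>?B. ?S w)"
    unfolding cnt_def by (rule card_UN_disjoint[symmetric]) (use assms in auto)
  also have "\<dots> \<le> card {i. i < length M \<and> (fst (M!i) = x \<or> snd (M!i) = x)}"
    by (rule card_mono) auto
  also have "\<dots> = mdeg M x" unfolding mdeg_def length_filter_conv_card by simp
  finally show ?thesis .
qed

lemma colouring:
  assumes "t \<ge> 3" "multigraph_on t M" "\<forall>v \<in> {1..t}. mdeg M v \<le> q * t"
  shows "\<exists>col. (\<forall>i<length M. col i \<in> {1..t} \<and> col i \<noteq> fst (M!i) \<and> col i \<noteq> snd (M!i))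
              \<and> (\<forall>x w. cnt M col x w \<le> 9 * q)"
  using assms(2,3)
proof (induction M rule: rev_induct)
  case Nil
  then show ?case by (auto simp: cnt_def)
next
  case (snoc e M)
  obtain u v where e: "e = (u, v)" by (cases e)
  have mgM: "multigraph_on t M" using snoc.prems(1) by (simp add: multigraph_on_def)
  have uv: "u \<in> {1..t}" "v \<in> {1..t}" "u \<noteq> v" using snoc.prems(1) e by (auto simp: multigraph_on_def)
  have degM: "\<forall>v \<in> {1..t}. mdeg M v \<le> q * t"
    using snoc.prems(2) by (auto simp: mdeg_snoc)
  obtain col where col1: "\<forall>i<length M. col i \<in> {1..t} \<and> col i \<noteq> fst (M!i) \<and> col i \<noteq> snd (M!i)"
    and col2: "\<forall>x w. cnt M col x w \<le> 9 * q"
    using snoc.IH[OF mgM degM] by blast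
  have du: "mdeg M u + 1 \<le> q * t" using snoc.prems(2) uv e by (force simp: mdeg_snoc)
  have dv: "mdeg M v + 1 \<le> q * t" using snoc.prems(2) uv e by (force simp: mdeg_snoc)
  have qpos: "q > 0" using du by (cases q) auto
  define Bu where "Bu = {w \<in> {1..t}. cnt M col u w \<ge> 9 * q}"
  define Bv where "Bv = {w \<in> {1..t}. cnt M col v w \<ge> 9 * q}"
  have bu: "card Bu * (9 * q) \<le> mdeg M u" unfolding Bu_def by (rule bad_count) simp
  have bv: "card Bv * (9 * q) \<le> mdeg M v" unfolding Bv_def by (rule bad_count) simp
  have "card Bu * 9 * q \<le> mdeg M u" using bu by (simp add: mult.assoc)
  hence "card Bu * 9 * q < q * t" using du by linarith
  hence cbu: "card Bu * 9 < t" using qpos by (simp add: mult.commute)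
  have "card Bv * 9 * q \<le> mdeg M v" using bv by (simp add: mult.assoc)
  hence "card Bv * 9 * q < q * t" using dv by linarith
  hence cbv: "card Bv * 9 < t" using qpos by (simp add: mult.commute)
  have c1: "card ({u, v} \<union> Bu \<union> Bv) \<le> card ({u,v} \<union> Bu) + card Bv" by (rule card_Un_le)
  have c2: "card ({u, v} \<union> Bu) \<le> card {u,v} + card Bu" by (rule card_Un_le)
  have "card ({u, v} \<union> Bu \<union> Bv) \<le> card {u,v} + card Bu + card Bv" using c1 c2 by linarith
  also have "\<dots> \<le> 2 + card Bu + card Bv" by (simp add: card_insert_le_m1)
  also have "\<dots> < t" using cbu cbv assms(1) by linarith
  finally have "card ({u, v} \<union> Bu \<union> Bv) < card {1..t}" by simp
  hence lt: "card ({u, v} \<union> Bu \<union> Bv) < card {1..t}" .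
  have finS: "finite ({u, v} \<union> Bu \<union> Bv)" by (simp add: Bu_def Bv_def)
  have "\<not> {1..t} \<subseteq> {u, v} \<union> Bu \<union> Bv"
  proof
    assume "{1..t} \<subseteq> {u, v} \<union> Bu \<union> Bv"
    from card_mono[OF finS this] lt show False by simp
  qed
  then obtain w0 where w0: "w0 \<in> {1..t}" "w0 \<noteq> u" "w0 \<noteq> v" "w0 \<notin> Bu" "w0 \<notin> Bv" by blast
  have cu: "cnt M col u w0 < 9 * q" using w0 Bu_def by auto
  have cv: "cnt M col v w0 < 9 * q" using w0 Bv_def by auto
  define col' where "col' = col(length M := w0)"
  have A: "\<forall>i<length (M @ [e]). col' i \<in> {1..t} \<and> col' i \<noteq> fst ((M @ [e])!i) \<and> col' i \<noteq> snd ((M @ [e])!i)"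
    using col1 w0 e by (auto simp: col'_def nth_append less_Suc_eq)
  have B: "\<forall>x w. cnt (M @ [e]) col' x w \<le> 9 * q"
  proof (intro allI)
    fix x w
    show "cnt (M @ [e]) col' x w \<le> 9 * q"
      unfolding col'_def cnt_snoc using col2[rule_format, of x w] cu cv e by auto
  qed
  show ?case using A B by blast
qed

lemma ex3: "(\<exists>j. Suc j < length [u, w, v] \<and> P j) \<longleftrightarrow> P 0 \<or> P 1"
proof
  assume "\<exists>j. Suc j < length [u, w, v] \<and> P j"
  then obtain j where "Suc j < length [u, w, v]" "P j" by blast
  then have "j = 0 \<or> j = 1" "P j" by (auto simp: less_Suc_eq)
  then show "P 0 \<or> P 1" by auto
next
  assume "P 0 \<or> P 1" then show "\<exists>j. Suc j < length [u, w, v] \<and> P j" by auto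
qed
lemma edge_on3: "edge_on a b [u, w, v] \<longleftrightarrow> {u, w} = {a, b} \<or> {w, v} = {a, b}"
  unfolding edge_on_def ex3[of u w v "\<lambda>j. {[u, w, v] ! j, [u, w, v] ! Suc j} = {a, b}"]
  by simp
lemma ex2: "(\<exists>j. Suc j < length [u, v] \<and> P j) \<longleftrightarrow> P 0"
proof
  assume "\<exists>j. Suc j < length [u, v] \<and> P j"
  then obtain j where "Suc j < length [u, v]" "P j" by blast
  then show "P 0" by simp
next
  assume "P 0" then show "\<exists>j. Suc j < length [u, v] \<and> P j" by auto
qed
lemma edge_on2: "edge_on a b [u, v] \<longleftrightarrow> {u, v} = {a, b}"
  unfolding edge_on_def ex2[of u v "\<lambda>j. {[u, v] ! j, [u, v] ! Suc j} = {a, b}"]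
  by simp

theorem mainTheorem16:
  fixes q t :: nat and M :: "(nat \<times> nat) list"
  assumes "multigraph_on t M"
    and "\<forall>v \<in> {1..t}. mdeg M v \<le> q * t"
  shows "\<exists>Ps. linkage t M Ps \<and>
           (\<forall>a \<in> {1..t}. \<forall>b \<in> {1..t}. a \<noteq> b \<longrightarrow>
              card {i. i < length M \<and> edge_on a b (Ps i)} \<le> 18 * q)"
proof (cases "t \<le> 18")
  case True
  define Ps where "Ps = (\<lambda>i. [fst (M!i), snd (M!i)])"
  have L: "linkage t M Ps"
    using assms(1) unfolding linkage_def Kpath_def Ps_def multigraph_on_def
    by (auto dest: nth_mem)
  have C: "card {i. i < length M \<and> edge_on a b (Ps i)} \<le> 18 * q"
    if "a \<in> {1..t}" "b \<in> {1..t}" "a \<noteq> b" for a b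
  proof -
    have "card {i. i < length M \<and> edge_on a b (Ps i)}
          \<le> card {i. i < length M \<and> (fst (M!i) = a \<or> snd (M!i) = a)}"
      by (rule card_mono) (auto simp: Ps_def edge_on2 doubleton_eq_iff)
    also have "\<dots> = mdeg M a" unfolding mdeg_def length_filter_conv_card by simp
    also have "\<dots> \<le> q * t" using assms(2) that by auto
    also have "\<dots> \<le> 18 * q" using True by simp
    finally show ?thesis .
  qed
  show ?thesis using L C by blast
next
  case False
  obtain col where col1: "\<forall>i<length M. col i \<in> {1..t} \<and> col i \<noteq> fst (M!i) \<and> col i \<noteq> snd (M!i)"
    and col2: "\<forall>x w. cnt M col x w \<le> 9 * q"
    using colouring[of t M q] False assms by auto
  define Ps where "Ps = (\<lambda>i. [fst (M!i), col i, snd (M!i)])"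
  have L: "linkage t M Ps"
    using assms(1) col1 unfolding linkage_def Kpath_def Ps_def multigraph_on_def
    by (auto dest: nth_mem)
  have C: "card {i. i < length M \<and> edge_on a b (Ps i)} \<le> 18 * q"
    if "a \<in> {1..t}" "b \<in> {1..t}" "a \<noteq> b" for a b
  proof -
    have "card {i. i < length M \<and> edge_on a b (Ps i)}
          \<le> card ({i. i < length M \<and> (fst (M!i) = b \<or> snd (M!i) = b) \<and> col i = a}
                 \<union> {i. i < length M \<and> (fst (M!i) = a \<or> snd (M!i) = a) \<and> col i = b})"
      by (rule card_mono) (auto simp: Ps_def edge_on3 doubleton_eq_iff)
    also have "\<dots> \<le> cnt M col b a + cnt M col a b"
      unfolding cnt_def by (rule card_Un_le)
    also have "\<dots> \<le> 18 * q" using col2[rule_format, of b a] col2[rule_format, of a b] by linarith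
    finally show ?thesis .
  qed
  show ?thesis using L C by blast
qed

end
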